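(* Let $X$ be a $\mu$-space. Then $X$ has a fundamental compact resolution if and only if $L_p(X)$ has a fundamental bounded resolution.
   Context: A $\mu$-space is a Tychonoff space in which every functionally bounded subset (one on which every continuous real function is bounded) is relatively compact. $L(X)$ is the free locally convex space over $X$ (the vector space with Hamel basis $X$, identified with the dual of $C_p(X)$, the continuous real functions on $X$ with the pointwise topology), and $L_p(X)$ denotes $L(X)$ with the weak topology $\sigma(L(X),C(X))$, i.e. the weak* dual of $C_p(X)$. Order $\mathbb{N}^{\mathbb{N}}$ pointwise. A fundamental compact resolution of $X$ is a family $\{K_\alpha:\alpha\in\mathbb{N}^{\mathbb{N}}\}$ of compact sets covering $X$ with $K_\alpha\subseteq K_\beta$ for $\alpha\le\beta$ such that every compact subset of $X$ lies in some $K_\alpha$. A fundamental bounded resolution of a locally convex space $F$ is a family of bounded sets with the same monotonicity, covering $F$, such that every bounded subset of $F$ lies in some member. *)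

theory Defs
  imports "HOL-Analysis.Analysis"
begin

definition tychonoff_space :: "'a topology \<Rightarrow> bool" where
  "tychonoff_space X \<longleftrightarrow> completely_regular_space X \<and> Hausdorff_space X"

definition functionally_bounded :: "'a topology \<Rightarrow> 'a set \<Rightarrow> bool" where
  "functionally_bounded X A \<longleftrightarrow> A \<subseteq> topspace X \<and>
     (\<forall>f. continuous_map X euclideanreal f \<longrightarrow> bounded (f ` A))"

definition mu_space :: "'a topology \<Rightarrow> bool" where
  "mu_space X \<longleftrightarrow> tychonoff_space X \<and>
     (\<forall>A. functionally_bounded X A \<longrightarrow> compactin X (X closure_of A))"

text \<open>The free vector space L(X): finitely supported real functions on the points of X
  (Hamel basis = the points of X, identified with the indicator functions).\<close>
definition Lcarrier :: "'a topology \<Rightarrow> ('a \<Rightarrow> real) set" where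
  "Lcarrier X = {c. finite {x. c x \<noteq> 0} \<and> {x. c x \<noteq> 0} \<subseteq> topspace X}"

definition Lpair :: "('a \<Rightarrow> real) \<Rightarrow> ('a \<Rightarrow> real) \<Rightarrow> real" where
  "Lpair c f = (\<Sum>x\<in>{x. c x \<noteq> 0}. c x * f x)"

definition Lp_topology :: "'a topology \<Rightarrow> ('a \<Rightarrow> real) topology" where
  "Lp_topology X = topology_generated_by
     {{c \<in> Lcarrier X. Lpair c f \<in> U} | f U. continuous_map X euclideanreal f \<and> open U}"

definition tvs_bounded :: "('b \<Rightarrow> real) topology \<Rightarrow> ('b \<Rightarrow> real) set \<Rightarrow> bool" where
  "tvs_bounded T B \<longleftrightarrow> B \<subseteq> topspace T \<and>
     (\<forall>U. openin T U \<and> (\<lambda>_. 0) \<in> U \<longrightarrow>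
        (\<exists>t>0. \<forall>s\<ge>t. B \<subseteq> (\<lambda>c x. s * c x) ` U))"

definition fundamental_compact_resolution ::
    "'a topology \<Rightarrow> ((nat \<Rightarrow> nat) \<Rightarrow> 'a set) \<Rightarrow> bool" where
  "fundamental_compact_resolution X K \<longleftrightarrow>
     (\<forall>\<alpha>. compactin X (K \<alpha>)) \<and>
     (\<forall>\<alpha> \<beta>. \<alpha> \<le> \<beta> \<longrightarrow> K \<alpha> \<subseteq> K \<beta>) \<and>
     (\<Union>\<alpha>. K \<alpha>) = topspace X \<and>
     (\<forall>C. compactin X C \<longrightarrow> (\<exists>\<alpha>. C \<subseteq> K \<alpha>))"

definition fundamental_bounded_resolution ::
    "('b \<Rightarrow> real) topology \<Rightarrow> ((nat \<Rightarrow> nat) \<Rightarrow> ('b \<Rightarrow> real) set) \<Rightarrow> bool" where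
  "fundamental_bounded_resolution T K \<longleftrightarrow>
     (\<forall>\<alpha>. tvs_bounded T (K \<alpha>)) \<and>
     (\<forall>\<alpha> \<beta>. \<alpha> \<le> \<beta> \<longrightarrow> K \<alpha> \<subseteq> K \<beta>) \<and>
     (\<Union>\<alpha>. K \<alpha>) = topspace T \<and>
     (\<forall>B. tvs_bounded T B \<longrightarrow> (\<exists>\<alpha>. B \<subseteq> K \<alpha>))"

end

theory Submission
  imports Defs
begin


definition supp :: "('a \<Rightarrow> real) \<Rightarrow> 'a set" where
  "supp c = {x. c x \<noteq> 0}"

lemma Lpair_supp: "Lpair c f = (\<Sum>x\<in>supp c. c x * f x)"
  by (simp add: Lpair_def supp_def)

lemma Lcarrier_iff: "c \<in> Lcarrier X \<longleftrightarrow> finite (supp c) \<and> supp c \<subseteq> topspace X"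
  by (simp add: Lcarrier_def supp_def)

lemma Lpair_zero [simp]: "Lpair (\<lambda>_. 0) f = 0"
  by (simp add: Lpair_def)

lemma zero_Lcarrier [simp]: "(\<lambda>_. 0) \<in> Lcarrier X"
  by (simp add: Lcarrier_def)

lemma Lpair_scale: "Lpair (\<lambda>x. r * c x) f = r * Lpair c f"
proof (cases "r = 0")
  case True then show ?thesis by simp
next
  case False
  then have "{x. r * c x \<noteq> 0} = {x. c x \<noteq> 0}" by auto
  then show ?thesis unfolding Lpair_def by (simp add: sum_distrib_left mult.assoc)
qed

lemma Lpair_cong: "(\<And>x. x \<in> supp c \<Longrightarrow> f x = g x) \<Longrightarrow> Lpair c f = Lpair c g"
  unfolding Lpair_supp by (rule sum.cong) auto

lemma Lpair_add: "Lpair c (\<lambda>x. f x + g x) = Lpair c f + Lpair c g"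
  unfolding Lpair_def by (simp add: distrib_left sum.distrib)

lemma Lpair_cmult: "Lpair c (\<lambda>x. r * f x) = r * Lpair c f"
  unfolding Lpair_def by (simp add: sum_distrib_left algebra_simps)

lemma topspace_Lp: "topspace (Lp_topology X) = Lcarrier X"
proof -
  have "Lcarrier X \<in> {{c \<in> Lcarrier X. Lpair c f \<in> U} | f U. continuous_map X euclideanreal f \<and> open U}"
    by (rule CollectI, rule exI[of _ "\<lambda>_. 0"], rule exI[of _ UNIV]) (auto simp: Lpair_def)
  then show ?thesis unfolding Lp_topology_def by auto
qed

lemma Lp_open_nbhd:
  assumes "openin (Lp_topology X) U" "p \<in> U"
  shows "\<exists>F e. finite F \<and> (\<forall>f\<in>F. continuous_map X euclideanreal f) \<and> e > 0 \<and>
     {c\<in>Lcarrier X. \<forall>f\<in>F. \<bar>Lpair c f - Lpair p f\<bar> < e} \<subseteq> U"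
proof -
  have g: "generate_topology_on {{c \<in> Lcarrier X. Lpair c f \<in> U} | f U. continuous_map X euclideanreal f \<and> open U} U"
    using assms(1) unfolding Lp_topology_def openin_topology_generated_by_iff .
  from g assms(2) show ?thesis
  proof (induction arbitrary: p)
    case Empty then show ?case by blast
  next
    case (Int a b)
    from Int.prems have pa: "p \<in> a" and pb: "p \<in> b" by auto
    obtain F1 e1 where 1: "finite F1" "\<forall>f\<in>F1. continuous_map X euclideanreal f" "e1 > 0"
      "{c\<in>Lcarrier X. \<forall>f\<in>F1. \<bar>Lpair c f - Lpair p f\<bar> < e1} \<subseteq> a"
      using Int.IH(1)[OF pa] by blast
    obtain F2 e2 where 2: "finite F2" "\<forall>f\<in>F2. continuous_map X euclideanreal f" "e2 > 0"
      "{c\<in>Lcarrier X. \<forall>f\<in>F2. \<bar>Lpair c f - Lpair p f\<bar> < e2} \<subseteq> b"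
      using Int.IH(2)[OF pb] by blast
    show ?case
    proof (intro exI conjI)
      show "finite (F1 \<union> F2)" using 1 2 by simp
      show "\<forall>f\<in>F1 \<union> F2. continuous_map X euclideanreal f" using 1 2 by blast
      show "min e1 e2 > 0" using 1 2 by simp
      show "{c\<in>Lcarrier X. \<forall>f\<in>F1 \<union> F2. \<bar>Lpair c f - Lpair p f\<bar> < min e1 e2} \<subseteq> a \<inter> b"
      proof
        fix c assume c: "c \<in> {c\<in>Lcarrier X. \<forall>f\<in>F1 \<union> F2. \<bar>Lpair c f - Lpair p f\<bar> < min e1 e2}"
        then have "c \<in> {c\<in>Lcarrier X. \<forall>f\<in>F1. \<bar>Lpair c f - Lpair p f\<bar> < e1}" by auto
        moreover have "c \<in> {c\<in>Lcarrier X. \<forall>f\<in>F2. \<bar>Lpair c f - Lpair p f\<bar> < e2}" using c by auto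
        ultimately show "c \<in> a \<inter> b" using 1(4) 2(4) by blast
      qed
    qed
  next
    case (UN K)
    then obtain k where "k \<in> K" "p \<in> k" by auto
    with UN.IH[of k p] show ?case by blast
  next
    case (Basis s)
    then obtain f V where s: "s = {c \<in> Lcarrier X. Lpair c f \<in> V}" and f: "continuous_map X euclideanreal f"
      and V: "open V" by auto
    with Basis.prems have "Lpair p f \<in> V" by auto
    with V obtain e where e: "e > 0" "ball (Lpair p f) e \<subseteq> V"
      by (meson open_contains_ball)
    show ?case
      apply (rule exI[of _ "{f}"], rule exI[of _ e])
      using e f s by (auto simp: dist_real_def abs_minus_commute)
  qed
qed

definition wbounded :: "'a topology \<Rightarrow> ('a \<Rightarrow> real) set \<Rightarrow> bool" where
  "wbounded X B \<longleftrightarrow> B \<subseteq> Lcarrier X \<and>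
     (\<forall>f. continuous_map X euclideanreal f \<longrightarrow> (\<exists>M. \<forall>c\<in>B. \<bar>Lpair c f\<bar> \<le> M))"

lemma tvs_bounded_iff: "tvs_bounded (Lp_topology X) B \<longleftrightarrow> wbounded X B"
proof
  assume tb: "tvs_bounded (Lp_topology X) B"
  show "wbounded X B"
    unfolding wbounded_def
  proof (intro conjI allI impI)
    show "B \<subseteq> Lcarrier X" using tb topspace_Lp unfolding tvs_bounded_def by metis
    fix f :: "'a \<Rightarrow> real" assume f: "continuous_map X euclideanreal f"
    define U where "U = {c \<in> Lcarrier X. Lpair c f \<in> ball 0 1}"
    have "openin (Lp_topology X) U"
      unfolding Lp_topology_def openin_topology_generated_by_iff U_def
      by (rule generate_topology_on.Basis, rule CollectI, rule exI[of _ f], rule exI[of _ "ball 0 1"]) (use f in blast)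
    moreover have "(\<lambda>_. 0) \<in> U" by (simp add: U_def)
    ultimately obtain t where t: "t > 0" "\<forall>s\<ge>t. B \<subseteq> (\<lambda>c x. s * c x) ` U"
      using tb unfolding tvs_bounded_def by blast
    show "\<exists>M. \<forall>c\<in>B. \<bar>Lpair c f\<bar> \<le> M"
    proof (intro exI ballI)
      fix c assume "c \<in> B"
      with t obtain u where u: "u \<in> U" "c = (\<lambda>x. t * u x)" by blast
      then have "\<bar>Lpair c f\<bar> = t * \<bar>Lpair u f\<bar>" using t by (simp add: Lpair_scale abs_mult)
      also have "\<dots> \<le> t * 1" using u t by (intro mult_left_mono) (auto simp: U_def)
      finally show "\<bar>Lpair c f\<bar> \<le> t" by simp
    qed
  qed
next
  assume wb: "wbounded X B"
  show "tvs_bounded (Lp_topology X) B"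
    unfolding tvs_bounded_def topspace_Lp
  proof (intro conjI allI impI)
    show "B \<subseteq> Lcarrier X" using wb wbounded_def by blast
    fix U assume U: "openin (Lp_topology X) U \<and> (\<lambda>_. 0) \<in> U"
    then obtain F e where Fe: "finite F" "\<forall>f\<in>F. continuous_map X euclideanreal f" "e > 0"
      "{c\<in>Lcarrier X. \<forall>f\<in>F. \<bar>Lpair c f\<bar> < e} \<subseteq> U"
      using Lp_open_nbhd[of X U "\<lambda>_. 0"] by auto
    have "\<forall>f\<in>F. \<exists>M. \<forall>c\<in>B. \<bar>Lpair c f\<bar> \<le> M" using wb Fe(2) unfolding wbounded_def by blast
    then obtain M where M0: "\<forall>f\<in>F. \<forall>c\<in>B. \<bar>Lpair c f\<bar> \<le> M f" by (rule bchoice[THEN exE]) blast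
    have M: "\<And>f c. f \<in> F \<Longrightarrow> c \<in> B \<Longrightarrow> \<bar>Lpair c f\<bar> \<le> M f" using M0 by blast
    define Mx where "Mx = (\<Sum>f\<in>F. \<bar>M f\<bar>)"
    have Mx: "f \<in> F \<Longrightarrow> c \<in> B \<Longrightarrow> \<bar>Lpair c f\<bar> \<le> Mx" for f c
    proof -
      assume "f \<in> F" "c \<in> B"
      then have "\<bar>Lpair c f\<bar> \<le> \<bar>M f\<bar>" using M[of f c] by linarith
      also have "\<dots> \<le> Mx" unfolding Mx_def using \<open>f\<in>F\<close> Fe(1)
        by (intro member_le_sum) auto
      finally show ?thesis .
    qed
    have Mx0: "Mx \<ge> 0" unfolding Mx_def by (simp add: sum_nonneg)
    show "\<exists>t>0. \<forall>s\<ge>t. B \<subseteq> (\<lambda>c x. s * c x) ` U"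
    proof (intro exI[of _ "(Mx + 1) / e"] conjI allI impI subsetI)
      show "(Mx + 1) / e > 0" using Mx0 Fe by simp
      fix s c assume s: "(Mx + 1) / e \<le> s" and c: "c \<in> B"
      have "(Mx + 1) / e > 0" using Mx0 Fe by simp
      then have spos: "s > 0" using s by linarith
      define u where "u = (\<lambda>x. (1/s) * c x)"
      have "u \<in> U"
      proof (rule subsetD[OF Fe(4)], safe)
        have "{x. (1/s) * c x \<noteq> 0} = {x. c x \<noteq> 0}" using spos by auto
        then show "u \<in> Lcarrier X" using c wb unfolding wbounded_def u_def Lcarrier_def by auto
        fix f assume "f \<in> F"
        have "\<bar>Lpair u f\<bar> = \<bar>Lpair c f\<bar> / s" unfolding u_def Lpair_scale using spos by (simp add: abs_mult)
        also have "\<dots> \<le> Mx / s" using Mx[OF \<open>f\<in>F\<close> c] spos by (simp add: divide_right_mono)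
        also have "\<dots> < e"
        proof -
          have "Mx + 1 \<le> s * e" using s Fe(3) by (simp add: pos_divide_le_eq)
          then have "Mx < e * s" by (simp add: mult.commute)
          then show ?thesis using spos by (simp add: pos_divide_less_eq)
        qed
        finally show "\<bar>Lpair u f\<bar> < e" .
      qed
      moreover have "c = (\<lambda>x. s * u x)" using spos by (simp add: u_def)
      ultimately show "c \<in> (\<lambda>c x. s * c x) ` U" by blast
    qed
  qed
qed



definition L1norm :: "('a \<Rightarrow> real) \<Rightarrow> real" where
  "L1norm c = (\<Sum>x\<in>supp c. \<bar>c x\<bar>)"

lemma L1norm_nonneg: "L1norm c \<ge> 0"
  unfolding L1norm_def by (simp add: sum_nonneg)

lemma Lpair_bound:
  assumes "finite (supp c)" "\<And>x. x \<in> supp c \<Longrightarrow> \<bar>f x\<bar> \<le> M"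
  shows "\<bar>Lpair c f\<bar> \<le> L1norm c * M"
proof -
  have "\<bar>Lpair c f\<bar> \<le> (\<Sum>x\<in>supp c. \<bar>c x * f x\<bar>)"
    unfolding Lpair_supp by (rule sum_abs)
  also have "\<dots> \<le> (\<Sum>x\<in>supp c. \<bar>c x\<bar> * M)"
    by (rule sum_mono) (use assms(2) in \<open>auto simp: abs_mult intro: mult_left_mono\<close>)
  also have "\<dots> = L1norm c * M" unfolding L1norm_def by (simp add: sum_distrib_right)
  finally show ?thesis .
qed

lemma sep_fun:
  assumes tych: "tychonoff_space X" and F: "finite F" "F \<subseteq> topspace X" "x \<in> F"
  obtains \<phi> where "continuous_map X euclideanreal \<phi>" "\<phi> x = 1" "\<And>y. y \<in> F - {x} \<Longrightarrow> \<phi> y = 0"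
    "\<And>y. 0 \<le> \<phi> y" "\<And>y. \<phi> y \<le> 1"
proof -
  have cr: "completely_regular_space X" and hd: "Hausdorff_space X"
    using tych unfolding tychonoff_space_def by auto
  have t1: "t1_space X" using hd by (rule Hausdorff_imp_t1_space)
  have cl: "closedin X (F - {x})"
    using t1 unfolding t1_space_closedin_finite using F by auto
  have xin: "x \<in> topspace X - (F - {x})" using F by auto
  have "\<exists>f::'a\<Rightarrow>real. continuous_map X (top_of_set {0..1}) f \<and> f x = 0 \<and> f ` (F - {x}) \<subseteq> {1}"
    by (rule cr[unfolded completely_regular_space_def, rule_format]) (use cl xin in simp)
  then obtain f :: "'a \<Rightarrow> real" where f: "continuous_map X (top_of_set {0..1}) f" "f x = 0" "f ` (F - {x}) \<subseteq> {1}"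
    by blast
  have fc: "continuous_map X euclideanreal f"
    using f(1) by (simp add: continuous_map_in_subtopology)
  show ?thesis
  proof
    show "continuous_map X euclideanreal (\<lambda>y. 1 - max 0 (min 1 (f y)))"
      by (intro continuous_intros fc)
    show "1 - max 0 (min 1 (f x)) = 1" using f(2) by simp
    fix y
    show "y \<in> F - {x} \<Longrightarrow> 1 - max 0 (min 1 (f y)) = 0" using f(3) by auto
    show "0 \<le> 1 - max 0 (min 1 (f y))" by simp
    show "1 - max 0 (min 1 (f y)) \<le> 1" by simp
  qed
qed

lemma sign_fun:
  assumes tych: "tychonoff_space X" and c: "c \<in> Lcarrier X"
  shows "\<exists>g. continuous_map X euclideanreal g \<and> (\<forall>y. \<bar>g y\<bar> \<le> 1) \<and> Lpair c g = L1norm c"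
proof -
  have fin: "finite (supp c)" and sub: "supp c \<subseteq> topspace X" using c by (auto simp: Lcarrier_iff)
  have "\<forall>x\<in>supp c. \<exists>\<phi>. continuous_map X euclideanreal \<phi> \<and> \<phi> x = 1 \<and> (\<forall>y\<in>supp c - {x}. \<phi> y = 0)"
  proof
    fix x assume "x \<in> supp c"
    then obtain \<phi> where "continuous_map X euclideanreal \<phi>" "\<phi> x = 1" "\<And>y. y \<in> supp c - {x} \<Longrightarrow> \<phi> y = 0"
      using sep_fun[OF tych fin sub] by metis
    then show "\<exists>\<phi>. continuous_map X euclideanreal \<phi> \<and> \<phi> x = 1 \<and> (\<forall>y\<in>supp c - {x}. \<phi> y = 0)" by blast
  qed
  then obtain \<Phi> where \<Phi>: "\<forall>x\<in>supp c. continuous_map X euclideanreal (\<Phi> x) \<and> \<Phi> x x = 1 \<and> (\<forall>y\<in>supp c - {x}. \<Phi> x y = 0)"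
    by (rule bchoice[THEN exE]) blast
  define g0 where "g0 y = (\<Sum>x\<in>supp c. sgn (c x) * \<Phi> x y)" for y
  define g where "g y = max (-1) (min 1 (g0 y))" for y
  have g0c: "continuous_map X euclideanreal g0"
    unfolding g0_def by (intro continuous_map_sum fin continuous_intros) (use \<Phi> in auto)
  have g0s: "g0 y = sgn (c y)" if y: "y \<in> supp c" for y
  proof -
    have "g0 y = sgn (c y) * \<Phi> y y + (\<Sum>x\<in>supp c - {y}. sgn (c x) * \<Phi> x y)"
      unfolding g0_def using fin y by (simp add: sum.remove)
    also have "(\<Sum>x\<in>supp c - {y}. sgn (c x) * \<Phi> x y) = 0"
      by (rule sum.neutral) (use \<Phi> y in auto)
    finally show ?thesis using \<Phi> y by simp
  qed
  show ?thesis
  proof (intro exI conjI allI)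
    show "continuous_map X euclideanreal g" unfolding g_def by (intro continuous_intros g0c)
    fix y show "\<bar>g y\<bar> \<le> 1" unfolding g_def by simp
  next
    have "Lpair c g = (\<Sum>x\<in>supp c. c x * sgn (c x))"
      unfolding Lpair_supp by (rule sum.cong) (auto simp: g_def g0s sgn_if)
    also have "\<dots> = L1norm c" unfolding L1norm_def by (rule sum.cong) (auto simp: abs_sgn)
    finally show "Lpair c g = L1norm c" .
  qed
qed

lemma Lpair_suminf:
  assumes "finite (supp c)" "\<And>x. summable (\<lambda>j. a j x)"
  shows "Lpair c (\<lambda>x. \<Sum>j. a j x) = (\<Sum>j. Lpair c (a j))"
    and "summable (\<lambda>j. Lpair c (a j))"
proof -
  have s: "\<And>x. summable (\<lambda>j. c x * a j x)" using assms(2) by (rule summable_mult)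
  have "Lpair c (\<lambda>x. \<Sum>j. a j x) = (\<Sum>x\<in>supp c. \<Sum>j. c x * a j x)"
    unfolding Lpair_supp using assms(2) by (simp add: suminf_mult)
  also have "\<dots> = (\<Sum>j. \<Sum>x\<in>supp c. c x * a j x)"
    by (rule suminf_sum[symmetric]) (use s in auto)
  finally show "Lpair c (\<lambda>x. \<Sum>j. a j x) = (\<Sum>j. Lpair c (a j))" unfolding Lpair_supp .
  show "summable (\<lambda>j. Lpair c (a j))" unfolding Lpair_supp by (rule summable_sum) (use s in auto)
qed

lemma geo_tail:
  fixes a :: "nat \<Rightarrow> real"
  assumes "\<And>j. \<bar>a j\<bar> \<le> C * (1/4) ^ (j + m)"
  shows "summable a" "\<bar>suminf a\<bar> \<le> C * (1/4)^m * (4/3)"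
proof -
  have g: "summable (\<lambda>j. (1/4::real)^j)" by (rule summable_geometric) simp
  have eq: "(\<lambda>j. C * (1/4::real) ^ (j + m)) = (\<lambda>j. (C * (1/4)^m) * (1/4)^j)"
    by (simp add: power_add mult_ac)
  have sg: "summable (\<lambda>j. C * (1/4::real) ^ (j + m))" unfolding eq by (rule summable_mult[OF g])
  show sa: "summable a" by (rule summable_comparison_test[OF _ sg]) (use assms in auto)
  have sra: "summable (\<lambda>j. \<bar>a j\<bar>)" by (rule summable_rabs_comparison_test[OF _ sg]) (use assms in auto)
  have "\<bar>suminf a\<bar> \<le> (\<Sum>j. \<bar>a j\<bar>)" by (rule summable_rabs[OF sra])
  also have "\<dots> \<le> (\<Sum>j. C * (1/4::real) ^ (j + m))" by (rule suminf_le[OF assms sra sg])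
  also have "\<dots> = C * (1/4)^m * (4/3)" unfolding eq suminf_mult[OF g]
    by (subst suminf_geometric) auto
  finally show "\<bar>suminf a\<bar> \<le> C * (1/4)^m * (4/3)" .
qed



lemma wbounded_L1:
  assumes tych: "tychonoff_space X" and wb: "wbounded X B"
  shows "\<exists>R. \<forall>c\<in>B. L1norm c \<le> R"
proof (rule ccontr)
  assume "\<not> ?thesis"
  then have unb: "\<And>R. \<exists>c\<in>B. L1norm c > R" by (meson not_le)
  have BL: "B \<subseteq> Lcarrier X" using wb wbounded_def by blast
  define sg where "sg c = (SOME g. continuous_map X euclideanreal g \<and> (\<forall>y. \<bar>g y\<bar> \<le> 1) \<and> Lpair c g = L1norm c)" for c
  have sg: "continuous_map X euclideanreal (sg c) \<and> (\<forall>y. \<bar>sg c y\<bar> \<le> 1) \<and> Lpair c (sg c) = L1norm c"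
    if "c \<in> B" for c
  proof -
    have ex: "\<exists>g. continuous_map X euclideanreal g \<and> (\<forall>y. \<bar>g y\<bar> \<le> 1) \<and> Lpair c g = L1norm c"
      using sign_fun[OF tych, of c] that BL by blast
    show ?thesis unfolding sg_def by (rule someI_ex[OF ex])
  qed
  define Mb where "Mb f = (SOME M. \<forall>c\<in>B. \<bar>Lpair c f\<bar> \<le> M)" for f
  have Mb: "\<bar>Lpair c f\<bar> \<le> Mb f" if "continuous_map X euclideanreal f" "c \<in> B" for f c
  proof -
    have "\<exists>M. \<forall>c\<in>B. \<bar>Lpair c f\<bar> \<le> M" using wb that(1) unfolding wbounded_def by blast
    then have "\<forall>c\<in>B. \<bar>Lpair c f\<bar> \<le> Mb f" unfolding Mb_def by (rule someI_ex)
    then show ?thesis using that(2) by blast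
  qed
  define \<epsilon> where "\<epsilon> k = (1/4::real)^k" for k
  have \<epsilon>pos: "\<epsilon> k > 0" for k by (simp add: \<epsilon>_def)
  define P where "P n x \<longleftrightarrow> fst x \<in> B \<and> (n = 0 \<longrightarrow> snd x = \<bar>Mb (sg (fst x))\<bar>)" for n :: nat and x :: "('a \<Rightarrow> real) \<times> real"
  define Q where "Q n x y \<longleftrightarrow> snd y = snd x + \<bar>Mb (sg (fst y))\<bar> \<and>
      3 * (real (Suc n) + snd x) \<le> \<epsilon> (Suc n) * L1norm (fst y)" for n :: nat and x y :: "('a \<Rightarrow> real) \<times> real"
  have "\<exists>s. \<forall>n. P n (s n) \<and> Q n (s n) (s (Suc n))"
  proof (rule dependent_nat_choice)
    obtain c0 where "c0 \<in> B" using unb by blast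
    then show "\<exists>x. P 0 x" unfolding P_def by (intro exI[of _ "(c0, \<bar>Mb (sg c0)\<bar>)"]) simp
  next
    fix x n assume "P n x"
    obtain c' where c': "c' \<in> B" "L1norm c' > 3 * (real (Suc n) + snd x) / \<epsilon> (Suc n)" using unb by blast
    then have "3 * (real (Suc n) + snd x) \<le> \<epsilon> (Suc n) * L1norm c'"
      using \<epsilon>pos[of "Suc n"] by (simp add: pos_divide_less_eq mult.commute)
    then show "\<exists>y. P (Suc n) y \<and> Q n x y"
      unfolding P_def Q_def using c' by (intro exI[of _ "(c', snd x + \<bar>Mb (sg c')\<bar>)"]) simp
  qed
  then obtain s where s: "\<And>n. P n (s n)" "\<And>n. Q n (s n) (s (Suc n))" by blast
  define c where "c n = fst (s n)" for n
  define S where "S n = snd (s n)" for n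
  define g where "g n = sg (c n)" for n
  have cB: "c n \<in> B" for n using s(1)[of n] by (simp add: P_def c_def)
  have gc: "continuous_map X euclideanreal (g n)" and gb: "\<bar>g n y\<bar> \<le> 1" and gL: "Lpair (c n) (g n) = L1norm (c n)"
    for n y using sg[OF cB[of n]] by (auto simp: g_def)
  have S_eq: "S n = (\<Sum>j\<le>n. \<bar>Mb (g j)\<bar>)" for n
  proof (induction n)
    case 0 then show ?case using s(1)[of 0] by (simp add: P_def S_def g_def c_def)
  next
    case (Suc n) then show ?case using s(2)[of n] by (simp add: Q_def S_def g_def c_def)
  qed
  have S0: "S n \<ge> 0" for n unfolding S_eq by (simp add: sum_nonneg)
  have big: "3 * (real (Suc n) + S n) \<le> \<epsilon> (Suc n) * L1norm (c (Suc n))" for n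
    using s(2)[of n] by (simp add: Q_def S_def c_def)
  define G where "G y = (\<Sum>j. \<epsilon> j * g j y)" for y
  have termb: "\<bar>\<epsilon> (j + m) * g (j + m) y\<bar> \<le> 1 * (1/4) ^ (j + m)" for j m y
    using gb[of "j+m" y] by (simp add: \<epsilon>_def abs_mult mult_left_le)
  have summ: "summable (\<lambda>j. \<epsilon> j * g j y)" for y
    using geo_tail(1)[of "\<lambda>j. \<epsilon> j * g j y" 1 0] termb[of _ 0 y] by simp
  have tail: "\<bar>G y - (\<Sum>j<n. \<epsilon> j * g j y)\<bar> \<le> (1/4)^n * (4/3)" for y n
  proof -
    have "G y - (\<Sum>j<n. \<epsilon> j * g j y) = (\<Sum>j. \<epsilon> (j + n) * g (j + n) y)"
      unfolding G_def using suminf_split_initial_segment[OF summ[of y], of n] by simp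
    also have "\<bar>\<dots>\<bar> \<le> 1 * (1/4)^n * (4/3)"
      by (rule geo_tail(2)) (rule termb)
    finally show ?thesis by simp
  qed
  have Gc: "continuous_map X euclideanreal G"
  proof -
    have "continuous_map X Met_TC.mtopology G"
    proof (rule Met_TC.continuous_map_uniform_limit[where F = sequentially and f = "\<lambda>n y. \<Sum>j<n. \<epsilon> j * g j y"])
      show "\<forall>\<^sub>F n in sequentially. continuous_map X Met_TC.mtopology (\<lambda>y. \<Sum>j<n. \<epsilon> j * g j y)"
        by (intro always_eventually allI) (simp add: continuous_map_sum continuous_intros gc)
      show "\<not> trivial_limit sequentially" by simp
      fix e :: real assume e: "e > 0"
      obtain N where N: "(1/4::real)^N < e * (3/4)" using real_arch_pow_inv[of "e * (3/4)" "1/4"] e by auto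
      show "\<forall>\<^sub>F n in sequentially. \<forall>y\<in>topspace X. G y \<in> UNIV \<and> dist (\<Sum>j<n. \<epsilon> j * g j y) (G y) < e"
        unfolding eventually_sequentially
      proof (intro exI[of _ N] allI impI ballI conjI)
        fix n y assume n: "N \<le> n"
        have "(1/4::real)^n \<le> (1/4)^N" using n by (simp add: power_decreasing)
        then have "(1/4::real)^n * (4/3) < e" using N by linarith
        then show "dist (\<Sum>j<n. \<epsilon> j * g j y) (G y) < e"
          using tail[of y n] by (simp add: dist_real_def abs_minus_commute)
      qed simp
    qed
    then show ?thesis by simp
  qed
  obtain MG where MG: "\<And>d. d \<in> B \<Longrightarrow> \<bar>Lpair d G\<bar> \<le> MG"
    using wb Gc unfolding wbounded_def by blast
  obtain n :: nat where n: "real n > MG" using reals_Archimedean2 by blast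
  define k where "k = Suc n"
  have fin: "finite (supp (c k))" using BL cB[of k] by (auto simp: Lcarrier_iff)
  define a where "a j = \<epsilon> j * Lpair (c k) (g j)" for j
  have LG: "Lpair (c k) G = suminf a" and sa: "summable a"
    using Lpair_suminf[OF fin summ] unfolding G_def a_def by (simp_all add: Lpair_cmult)
  have Lb: "\<bar>Lpair (c k) (g j)\<bar> \<le> L1norm (c k)" for j
    using Lpair_bound[OF fin, of "g j" 1] gb by simp
  have split: "suminf a = (\<Sum>j. a (j + Suc k)) + (\<Sum>j<k. a j) + a k"
    using suminf_split_initial_segment[OF sa, of "Suc k"] by simp
  have ak: "a k = \<epsilon> k * L1norm (c k)" by (simp add: a_def gL)
  have head: "\<bar>\<Sum>j<k. a j\<bar> \<le> S n"
  proof -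
    have "\<bar>\<Sum>j<k. a j\<bar> \<le> (\<Sum>j<k. \<bar>a j\<bar>)" by (rule sum_abs)
    also have "\<dots> \<le> (\<Sum>j<k. \<bar>Mb (g j)\<bar>)"
    proof (rule sum_mono)
      fix j
      have "\<bar>a j\<bar> = \<epsilon> j * \<bar>Lpair (c k) (g j)\<bar>" using \<epsilon>pos[of j] by (simp add: a_def abs_mult)
      also have "\<dots> \<le> 1 * \<bar>Lpair (c k) (g j)\<bar>" by (rule mult_right_mono) (simp_all add: \<epsilon>_def power_le_one)
      also have "\<dots> \<le> \<bar>Mb (g j)\<bar>" using Mb[OF gc cB[of k], of j] by simp
      finally show "\<bar>a j\<bar> \<le> \<bar>Mb (g j)\<bar>" .
    qed
    also have "\<dots> = S n" unfolding S_eq k_def by (simp add: lessThan_Suc_atMost)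
    finally show ?thesis .
  qed
  have tl: "\<bar>\<Sum>j. a (j + Suc k)\<bar> \<le> L1norm (c k) * (1/4)^(Suc k) * (4/3)"
  proof (rule geo_tail(2))
    fix j
    have "\<bar>a (j + Suc k)\<bar> = \<epsilon> (j + Suc k) * \<bar>Lpair (c k) (g (j + Suc k))\<bar>"
      using \<epsilon>pos[of "j + Suc k"] by (simp add: a_def abs_mult)
    also have "\<dots> \<le> \<epsilon> (j + Suc k) * L1norm (c k)" by (rule mult_left_mono[OF Lb]) (simp add: less_imp_le[OF \<epsilon>pos])
    finally show "\<bar>a (j + Suc k)\<bar> \<le> L1norm (c k) * (1/4)^(j + Suc k)" by (simp add: \<epsilon>_def mult.commute)
  qed
  have tl2: "L1norm (c k) * (1/4)^(Suc k) * (4/3) = \<epsilon> k * L1norm (c k) / 3"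
    by (simp add: \<epsilon>_def)
  have h1: "3 * (real k + S n) \<le> \<epsilon> k * L1norm (c k)" using big[of n] by (simp add: k_def)
  have h2: "\<bar>\<Sum>j. a (j + Suc k)\<bar> \<le> \<epsilon> k * L1norm (c k) / 3" using tl tl2 by linarith
  have h3: "Lpair (c k) G = (\<Sum>j. a (j + Suc k)) + (\<Sum>j<k. a j) + \<epsilon> k * L1norm (c k)"
    using LG split ak by simp
  have aux: "x \<le> L" if "3*(x+s) \<le> E" "L = T + H + E" "0 \<le> s" "-T \<le> E/3" "-H \<le> s" "0 \<le> x"
    for x s E L T H :: real
    using that by argo
  have "real k \<le> Lpair (c k) G"
    by (rule aux[OF h1 h3 S0[of n]]) (use h2 head in auto)
  then have "real k \<le> \<bar>Lpair (c k) G\<bar>" by linarith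
  moreover have "\<bar>Lpair (c k) G\<bar> \<le> MG" using MG cB by blast
  ultimately show False using n k_def by simp
qed



definition tent :: "real \<Rightarrow> real" where "tent t = max 0 (1 - \<bar>t\<bar>)"

lemma wbounded_supp:
  assumes tych: "tychonoff_space X" and wb: "wbounded X B"
  shows "functionally_bounded X (\<Union>c\<in>B. supp c)"
proof -
  have BL: "B \<subseteq> Lcarrier X" using wb wbounded_def by blast
  have finB: "finite (supp c)" and subB: "supp c \<subseteq> topspace X" if "c \<in> B" for c
  proof -
    have "c \<in> Lcarrier X" using BL that by blast
    then show "finite (supp c)" "supp c \<subseteq> topspace X" by (simp_all add: Lcarrier_iff)
  qed
  show ?thesis
    unfolding functionally_bounded_def
  proof (intro conjI allI impI)
    show "(\<Union>c\<in>B. supp c) \<subseteq> topspace X" using subB by blast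
    fix f :: "'a \<Rightarrow> real" assume fc: "continuous_map X euclideanreal f"
    show "bounded (f ` (\<Union>c\<in>B. supp c))"
    proof (rule ccontr)
      assume nb: "\<not> bounded (f ` (\<Union>c\<in>B. supp c))"
      define h where "h y = \<bar>f y\<bar>" for y
      have hc: "continuous_map X euclideanreal h" unfolding h_def by (intro continuous_intros fc)
      have h0: "h y \<ge> 0" for y by (simp add: h_def)
      have unb: "\<exists>c\<in>B. \<exists>x\<in>supp c. h x > R" for R
        using nb unfolding bounded_real h_def by (auto simp: not_le)
      define top where "top c = Max (insert 0 (h ` supp c))" for c
      have top_ge: "h y \<le> top c" if "c \<in> B" "y \<in> supp c" for c y
        unfolding top_def using finB[OF that(1)] that(2) by (intro Max_ge) auto
      have tent_c: "continuous_map X euclideanreal (\<lambda>y. tent (h y - r))" for r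
        unfolding tent_def by (intro continuous_intros hc)
      define Phi where "Phi c x = (SOME \<phi>. continuous_map X euclideanreal \<phi> \<and> \<phi> x = 1 \<and> (\<forall>y\<in>supp c - {x}. \<phi> y = 0))" for c x
      have Phi: "continuous_map X euclideanreal (Phi c x) \<and> Phi c x x = 1 \<and> (\<forall>y\<in>supp c - {x}. Phi c x y = 0)"
        if cB0: "c \<in> B" and xs0: "x \<in> supp c" for c x
      proof -
        obtain \<phi> where "continuous_map X euclideanreal \<phi>" "\<phi> x = 1" "\<And>y. y \<in> supp c - {x} \<Longrightarrow> \<phi> y = 0"
          using sep_fun[OF tych finB[OF cB0] subB[OF cB0] xs0] by metis
        then have ex: "\<exists>\<phi>. continuous_map X euclideanreal \<phi> \<and> \<phi> x = 1 \<and> (\<forall>y\<in>supp c - {x}. \<phi> y = 0)" by blast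
        show ?thesis unfolding Phi_def by (rule someI_ex[OF ex])
      qed
      define \<theta> where "\<theta> c x y = tent (h y - h x) * Phi c x y" for c x y
      have \<theta>c: "continuous_map X euclideanreal (\<theta> c x)" if "c \<in> B" "x \<in> supp c" for c x
        unfolding \<theta>_def using Phi[OF that] tent_c[of "h x"] by (intro continuous_intros) auto
      have \<theta>L: "Lpair c (\<theta> c x) = c x" if "c \<in> B" "x \<in> supp c" for c x
      proof -
        have "Lpair c (\<theta> c x) = c x * \<theta> c x x + (\<Sum>y\<in>supp c - {x}. c y * \<theta> c x y)"
          unfolding Lpair_supp using finB[OF that(1)] that(2) by (simp add: sum.remove)
        also have "(\<Sum>y\<in>supp c - {x}. c y * \<theta> c x y) = 0"
          by (rule sum.neutral) (use Phi[OF that] in \<open>auto simp: \<theta>_def\<close>)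
        moreover have "\<theta> c x x = 1" using Phi[OF that] by (simp add: \<theta>_def tent_def)
        ultimately show ?thesis by simp
      qed
      have \<theta>0: "\<theta> c x y = 0" if "h y \<le> h x - 1" for c x y
        using that unfolding \<theta>_def tent_def by simp
      define P where "P n s \<longleftrightarrow> fst s \<in> B \<and> fst (snd s) \<in> supp (fst s) \<and>
          continuous_map X euclideanreal (snd (snd s)) \<and> Lpair (fst s) (snd (snd s)) = real n"
        for n :: nat and s :: "('a \<Rightarrow> real) \<times> 'a \<times> ('a \<Rightarrow> real)"
      define Q where "Q n s s' \<longleftrightarrow> h (fst (snd s')) \<ge> top (fst s) + 2 \<and>
          (\<forall>y. h y \<le> h (fst (snd s')) - 1 \<longrightarrow> snd (snd s') y = snd (snd s) y)"
        for n :: nat and s s' :: "('a \<Rightarrow> real) \<times> 'a \<times> ('a \<Rightarrow> real)"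
      have "\<exists>s. \<forall>n. P n (s n) \<and> Q n (s n) (s (Suc n))"
      proof (rule dependent_nat_choice)
        obtain c0 x0 where "c0 \<in> B" "x0 \<in> supp c0" using unb[of 0] by blast
        then show "\<exists>s. P 0 s" unfolding P_def
          by (intro exI[of _ "(c0, x0, \<lambda>_. 0)"]) (simp add: Lpair_def)
      next
        fix s n assume Ps: "P n s"
        obtain c' x' where c': "c' \<in> B" "x' \<in> supp c'" "h x' > top (fst s) + 2"
          using unb[of "top (fst s) + 2"] by blast
        define G where "G = snd (snd s)"
        define a where "a = (real (Suc n) - Lpair c' G) / c' x'"
        define G' where "G' y = G y + a * \<theta> c' x' y" for y
        have cx: "c' x' \<noteq> 0" using c'(2) by (simp add: supp_def)
        have "Lpair c' G' = Lpair c' G + a * c' x'"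
          unfolding G'_def Lpair_add Lpair_cmult \<theta>L[OF c'(1,2)] by simp
        also have "\<dots> = real (Suc n)" using cx by (simp add: a_def)
        finally have L': "Lpair c' G' = real (Suc n)" .
        have G'c: "continuous_map X euclideanreal G'"
          unfolding G'_def using Ps \<theta>c[OF c'(1,2)] by (intro continuous_intros) (auto simp: P_def G_def)
        show "\<exists>s'. P (Suc n) s' \<and> Q n s s'"
        proof (intro exI[of _ "(c', x', G')"] conjI)
          show "P (Suc n) (c', x', G')" unfolding P_def using c' G'c L' by simp
          show "Q n s (c', x', G')" unfolding Q_def using c'(3) \<theta>0[of _ x' c'] by (auto simp: G'_def G_def)
        qed
      qed
      then obtain s where sP: "\<And>n. P n (s n)" and sQ: "\<And>n. Q n (s n) (s (Suc n))" by blast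
      define c where "c n = fst (s n)" for n
      define x where "x n = fst (snd (s n))" for n
      define G where "G n = snd (snd (s n))" for n
      have cB: "c n \<in> B" and xs: "x n \<in> supp (c n)" and Gc: "continuous_map X euclideanreal (G n)"
        and GL: "Lpair (c n) (G n) = real n" for n
        using sP[of n] by (auto simp: P_def c_def x_def G_def)
      have hx1: "h (x (Suc n)) \<ge> top (c n) + 2" and Gst: "\<And>y. h y \<le> h (x (Suc n)) - 1 \<Longrightarrow> G (Suc n) y = G n y" for n
        using sQ[of n] by (auto simp: Q_def c_def x_def G_def)
      have hx2: "h (x (Suc n)) \<ge> h (x n) + 2" for n
        using hx1[of n] top_ge[OF cB xs, of n] by linarith
      have hxlin: "h (x n) \<ge> 2 * real n" for n
      proof (induction n)
        case 0 then show ?case using h0 by simp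
      next
        case (Suc n) then show ?case using hx2[of n] by simp
      qed
      have hxmono: "h (x n) \<le> h (x m)" if "n \<le> m" for n m
      proof (rule lift_Suc_mono_le[of "\<lambda>n. h (x n)"])
        show "h (x k) \<le> h (x (Suc k))" for k using hx2[of k] by linarith
      qed (rule that)
      have stab: "G m y = G n y" if "h y \<le> h (x (Suc n)) - 1" "n \<le> m" for y n m
        using that(2)
      proof (induction m rule: dec_induct)
        case base then show ?case by simp
      next
        case (step m)
        have "h (x (Suc n)) \<le> h (x (Suc m))" using step.hyps(1) by (intro hxmono) simp
        then have "G (Suc m) y = G m y" using that(1) by (intro Gst) simp
        then show ?case using step.IH by simp
      qed
      have exn: "\<exists>n. h y < h (x (Suc n)) - 1" for y
      proof -
        obtain n :: nat where n: "h y \<le> real n" using real_arch_simple by blast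
        have "h (x (Suc n)) \<ge> 2 * real (Suc n)" by (rule hxlin)
        then have "h y < h (x (Suc n)) - 1" using n by simp
        then show ?thesis by blast
      qed
      define N where "N y = (LEAST n. h y \<le> h (x (Suc n)) - 1)" for y
      define g where "g y = G (N y) y" for y
      have gv: "g y = G n y" if "h y \<le> h (x (Suc n)) - 1" for y n
      proof -
        have le: "N y \<le> n" unfolding N_def using that by (rule Least_le)
        have "h y \<le> h (x (Suc (N y))) - 1" unfolding N_def using that by (rule LeastI)
        then have "G n y = G (N y) y" using le by (rule stab)
        then show ?thesis by (simp add: g_def)
      qed
      have gc: "continuous_map X euclideanreal g"
        unfolding continuous_map_def
      proof (intro conjI allI impI)
        show "g \<in> topspace X \<rightarrow> topspace euclideanreal" by simp
        fix U :: "real set" assume "openin euclideanreal U"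
        then have U: "open U" by simp
        have eq: "{y \<in> topspace X. g y \<in> U} =
            (\<Union>n. {y \<in> topspace X. h y \<in> {..< h (x (Suc n)) - 1}} \<inter> {y \<in> topspace X. G n y \<in> U})"
        proof (intro equalityI subsetI)
          fix y assume y: "y \<in> {y \<in> topspace X. g y \<in> U}"
          obtain n where n: "h y < h (x (Suc n)) - 1" using exn by blast
          then have "g y = G n y" by (intro gv) simp
          then show "y \<in> (\<Union>n. {y \<in> topspace X. h y \<in> {..< h (x (Suc n)) - 1}} \<inter> {y \<in> topspace X. G n y \<in> U})"
            using y n by auto
        next
          fix y assume "y \<in> (\<Union>n. {y \<in> topspace X. h y \<in> {..< h (x (Suc n)) - 1}} \<inter> {y \<in> topspace X. G n y \<in> U})"
          then obtain n where "y \<in> topspace X" "h y < h (x (Suc n)) - 1" "G n y \<in> U" by auto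
          then show "y \<in> {y \<in> topspace X. g y \<in> U}" using gv[of y n] by simp
        qed
        show "openin X {y \<in> topspace X. g y \<in> U}"
          unfolding eq
        proof (intro openin_Union ballI)
          fix V assume "V \<in> range (\<lambda>n. {y \<in> topspace X. h y \<in> {..< h (x (Suc n)) - 1}} \<inter> {y \<in> topspace X. G n y \<in> U})"
          then obtain n where V: "V = {y \<in> topspace X. h y \<in> {..< h (x (Suc n)) - 1}} \<inter> {y \<in> topspace X. G n y \<in> U}" by blast
          show "openin X V" unfolding V
            by (intro openin_Int openin_continuous_map_preimage[OF hc] openin_continuous_map_preimage[OF Gc]) (simp_all add: U)
        qed
      qed
      have gL: "Lpair (c n) g = real n" for n
      proof -
        have "Lpair (c n) g = Lpair (c n) (G n)"
        proof (rule Lpair_cong)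
          fix y assume "y \<in> supp (c n)"
          then have "h y \<le> top (c n)" using top_ge cB by blast
          then show "g y = G n y" using hx1[of n] by (intro gv) simp
        qed
        then show ?thesis using GL by simp
      qed
      obtain M where M: "\<And>d. d \<in> B \<Longrightarrow> \<bar>Lpair d g\<bar> \<le> M"
        using wb gc unfolding wbounded_def by blast
      obtain n :: nat where n: "real n > M" using reals_Archimedean2 by blast
      have "\<bar>Lpair (c n) g\<bar> \<le> M" using M cB by blast
      then show False using gL[of n] n by simp
    qed
  qed
qed



lemma compact_fbound:
  assumes "compactin X K" "continuous_map X euclideanreal f"
  shows "\<exists>R\<ge>0. \<forall>y\<in>K. \<bar>f y\<bar> \<le> R"
proof -
  have "compact (f ` K)" using image_compactin[OF assms] by simp
  then have "bounded (f ` K)" by (rule compact_imp_bounded)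
  then obtain R where R: "\<forall>z\<in>f ` K. \<bar>z\<bar> \<le> R" unfolding bounded_real by blast
  show ?thesis by (rule exI[of _ "\<bar>R\<bar>"]) (use R in force)
qed

definition delta :: "'a \<Rightarrow> 'a \<Rightarrow> real" where "delta x = (\<lambda>y. if y = x then 1 else 0)"

lemma supp_delta [simp]: "supp (delta x) = {x}" by (auto simp: supp_def delta_def)

lemma Lpair_delta [simp]: "Lpair (delta x) f = f x" unfolding Lpair_supp supp_delta by (simp add: delta_def)

lemma delta_L: "x \<in> topspace X \<Longrightarrow> delta x \<in> Lcarrier X" by (simp add: Lcarrier_iff)

lemma bump_le: "(\<alpha>::nat \<Rightarrow> nat) \<le> \<alpha>(0 := max (\<alpha> 0) (nat \<lceil>R\<rceil>))"
  by (auto simp: le_fun_def)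

lemma bump_R: "R \<le> real ((\<alpha>(0 := max (\<alpha> 0) (nat \<lceil>R\<rceil>))) 0)"
  using real_nat_ceiling_ge[of R] by (simp add: max_def)

theorem proposition3p8:
  fixes X :: "'a topology"
  assumes "mu_space X"
  shows "(\<exists>K. fundamental_compact_resolution X K) \<longleftrightarrow>
         (\<exists>K. fundamental_bounded_resolution (Lp_topology X) K)"
proof -
  have tych: "tychonoff_space X" and mu: "\<And>A. functionally_bounded X A \<Longrightarrow> compactin X (X closure_of A)"
    using assms unfolding mu_space_def by auto
  show ?thesis
  proof
    assume "\<exists>K. fundamental_compact_resolution X K"
    then obtain K where K: "fundamental_compact_resolution X K" by blast
    have Kc: "\<And>\<alpha>. compactin X (K \<alpha>)" and Km: "\<And>\<alpha> \<beta>. \<alpha> \<le> \<beta> \<Longrightarrow> K \<alpha> \<subseteq> K \<beta>"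
      and Kcov: "(\<Union>\<alpha>. K \<alpha>) = topspace X" and Kf: "\<And>C. compactin X C \<Longrightarrow> \<exists>\<alpha>. C \<subseteq> K \<alpha>"
      using K unfolding fundamental_compact_resolution_def by simp_all
    define Kb where "Kb \<alpha> = {c \<in> Lcarrier X. supp c \<subseteq> K \<alpha> \<and> L1norm c \<le> real (\<alpha> 0)}" for \<alpha>
    have mem: "c \<in> Kb \<alpha>" if "c \<in> Lcarrier X" "supp c \<subseteq> K \<beta>" "\<beta> \<le> \<alpha>" "L1norm c \<le> real (\<alpha> 0)" for c \<alpha> \<beta>
      using that Km[of \<beta> \<alpha>] unfolding Kb_def by blast
    show "\<exists>K. fundamental_bounded_resolution (Lp_topology X) K"
      unfolding fundamental_bounded_resolution_def tvs_bounded_iff topspace_Lp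
    proof (intro exI[of _ Kb] conjI allI impI)
      fix \<alpha> :: "nat \<Rightarrow> nat"
      show "wbounded X (Kb \<alpha>)"
        unfolding wbounded_def
      proof (intro conjI allI impI)
        show "Kb \<alpha> \<subseteq> Lcarrier X" unfolding Kb_def by blast
        fix f :: "'a \<Rightarrow> real" assume fc: "continuous_map X euclideanreal f"
        obtain R where R: "R \<ge> 0" "\<And>y. y \<in> K \<alpha> \<Longrightarrow> \<bar>f y\<bar> \<le> R" using compact_fbound[OF Kc fc] by blast
        show "\<exists>M. \<forall>c\<in>Kb \<alpha>. \<bar>Lpair c f\<bar> \<le> M"
        proof (intro exI ballI)
          fix c assume c: "c \<in> Kb \<alpha>"
          then have fin: "finite (supp c)" by (simp add: Kb_def Lcarrier_iff)
          have "\<bar>Lpair c f\<bar> \<le> L1norm c * R" by (rule Lpair_bound[OF fin]) (use c R in \<open>auto simp: Kb_def\<close>)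
          also have "\<dots> \<le> real (\<alpha> 0) * R" using c R by (intro mult_right_mono) (auto simp: Kb_def)
          finally show "\<bar>Lpair c f\<bar> \<le> real (\<alpha> 0) * R" .
        qed
      qed
    next
      fix \<alpha> \<beta> :: "nat \<Rightarrow> nat" assume le: "\<alpha> \<le> \<beta>"
      then have "\<alpha> 0 \<le> \<beta> 0" by (simp add: le_fun_def)
      then show "Kb \<alpha> \<subseteq> Kb \<beta>" using Km[OF le] unfolding Kb_def by force
    next
      show "(\<Union>\<alpha>. Kb \<alpha>) = Lcarrier X"
      proof (intro equalityI subsetI)
        fix c assume "c \<in> (\<Union>\<alpha>. Kb \<alpha>)" then show "c \<in> Lcarrier X" by (auto simp: Kb_def)
      next
        fix c assume c: "c \<in> Lcarrier X"
        then have "compactin X (supp c)" by (simp add: Lcarrier_iff finite_imp_compactin)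
        then obtain \<alpha> where "supp c \<subseteq> K \<alpha>" using Kf by blast
        then have "c \<in> Kb (\<alpha>(0 := max (\<alpha> 0) (nat \<lceil>L1norm c\<rceil>)))"
          by (rule mem[OF c _ bump_le bump_R])
        then show "c \<in> (\<Union>\<alpha>. Kb \<alpha>)" by blast
      qed
    next
      fix B assume wb: "wbounded X B"
      have "compactin X (X closure_of (\<Union>c\<in>B. supp c))" by (rule mu[OF wbounded_supp[OF tych wb]])
      then obtain \<alpha> where \<alpha>: "X closure_of (\<Union>c\<in>B. supp c) \<subseteq> K \<alpha>" using Kf by blast
      have sub: "(\<Union>c\<in>B. supp c) \<subseteq> topspace X" using wbounded_supp[OF tych wb] by (simp add: functionally_bounded_def)
      obtain R where R: "\<forall>c\<in>B. L1norm c \<le> R" using wbounded_L1[OF tych wb] by blast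
      have "B \<subseteq> Kb (\<alpha>(0 := max (\<alpha> 0) (nat \<lceil>R\<rceil>)))"
      proof
        fix c assume c: "c \<in> B"
        have cL: "c \<in> Lcarrier X" using wb c unfolding wbounded_def by blast
        have "supp c \<subseteq> K \<alpha>" using closure_of_subset[OF sub] \<alpha> c by blast
        moreover have "L1norm c \<le> real ((\<alpha>(0 := max (\<alpha> 0) (nat \<lceil>R\<rceil>))) 0)"
          using R c bump_R[of R \<alpha>] by force
        ultimately show "c \<in> Kb (\<alpha>(0 := max (\<alpha> 0) (nat \<lceil>R\<rceil>)))"
          by (rule mem[OF cL _ bump_le])
      qed
      then show "\<exists>\<alpha>. B \<subseteq> Kb \<alpha>" by blast
    qed
  next
    assume "\<exists>K. fundamental_bounded_resolution (Lp_topology X) K"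
    then obtain Kb where Kb: "fundamental_bounded_resolution (Lp_topology X) Kb" by blast
    have Kbb: "\<And>\<alpha>. wbounded X (Kb \<alpha>)" and Kbm: "\<And>\<alpha> \<beta>. \<alpha> \<le> \<beta> \<Longrightarrow> Kb \<alpha> \<subseteq> Kb \<beta>"
      and Kbcov: "(\<Union>\<alpha>. Kb \<alpha>) = Lcarrier X" and Kbf: "\<And>B. wbounded X B \<Longrightarrow> \<exists>\<alpha>. B \<subseteq> Kb \<alpha>"
      using Kb unfolding fundamental_bounded_resolution_def tvs_bounded_iff topspace_Lp by simp_all
    define S where "S \<alpha> = (\<Union>c\<in>Kb \<alpha>. supp c)" for \<alpha>
    have Ssub: "S \<alpha> \<subseteq> topspace X" for \<alpha>
      using wbounded_supp[OF tych Kbb[of \<alpha>]] by (simp add: functionally_bounded_def S_def)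
    show "\<exists>K. fundamental_compact_resolution X K"
      unfolding fundamental_compact_resolution_def
    proof (intro exI[of _ "\<lambda>\<alpha>. X closure_of S \<alpha>"] conjI allI impI)
      fix \<alpha> :: "nat \<Rightarrow> nat"
      show "compactin X (X closure_of S \<alpha>)" unfolding S_def by (rule mu[OF wbounded_supp[OF tych Kbb]])
    next
      fix \<alpha> \<beta> :: "nat \<Rightarrow> nat" assume "\<alpha> \<le> \<beta>"
      then have "S \<alpha> \<subseteq> S \<beta>" using Kbm unfolding S_def by blast
      then show "X closure_of S \<alpha> \<subseteq> X closure_of S \<beta>" by (rule closure_of_mono)
    next
      show "(\<Union>\<alpha>. X closure_of S \<alpha>) = topspace X"
      proof (intro equalityI subsetI)
        fix x assume "x \<in> (\<Union>\<alpha>. X closure_of S \<alpha>)"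
        then obtain \<alpha> where "x \<in> X closure_of S \<alpha>" by blast
        then show "x \<in> topspace X" using closure_of_subset_topspace[of X "S \<alpha>"] by (rule subsetD[rotated])
      next
        fix x assume x: "x \<in> topspace X"
        have "delta x \<in> (\<Union>\<alpha>. Kb \<alpha>)" unfolding Kbcov by (rule delta_L[OF x])
        then obtain \<alpha> where "delta x \<in> Kb \<alpha>" by blast
        then have "x \<in> S \<alpha>" unfolding S_def by force
        then have "x \<in> X closure_of S \<alpha>" using closure_of_subset[OF Ssub] by blast
        then show "x \<in> (\<Union>\<alpha>. X closure_of S \<alpha>)" by blast
      qed
    next
      fix C assume C: "compactin X C"
      have Csub: "C \<subseteq> topspace X" using C by (rule compactin_subset_topspace)
      have "wbounded X (delta ` C)"
        unfolding wbounded_def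
      proof (intro conjI allI impI)
        show "delta ` C \<subseteq> Lcarrier X" using Csub delta_L[of _ X] by auto
        fix f :: "'a \<Rightarrow> real" assume fc: "continuous_map X euclideanreal f"
        obtain R where R: "\<forall>y\<in>C. \<bar>f y\<bar> \<le> R" using compact_fbound[OF C fc] by blast
        show "\<exists>M. \<forall>c\<in>delta ` C. \<bar>Lpair c f\<bar> \<le> M" using R by auto
      qed
      then obtain \<alpha> where \<alpha>: "delta ` C \<subseteq> Kb \<alpha>" using Kbf by blast
      have "C \<subseteq> S \<alpha>"
      proof
        fix x assume "x \<in> C"
        then have "delta x \<in> Kb \<alpha>" using \<alpha> by blast
        then show "x \<in> S \<alpha>" unfolding S_def by force
      qed
      then have "C \<subseteq> X closure_of S \<alpha>" using closure_of_subset[OF Ssub] by blast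
      then show "\<exists>\<alpha>. C \<subseteq> X closure_of S \<alpha>" by blast
    qed
  qed
qed

end
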